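(* Let $\mathcal X,\mathcal Y,\mathcal T$ be Polish spaces, let $F:\mathcal X\times\mathcal T\to\mathbb R$ be measurable, and let $(X,Y)$ be an $\mathcal X\times\mathcal Y$-valued random variable on a probability space $(\Omega,\mathcal F,\mathbb P)$. For $t\in\mathcal T$, $\epsilon>0$ let $B(t,\epsilon)$ be the open ball of radius $\epsilon$ around $t$ in $\mathcal T$. Assume $F(X,t)$ is integrable for all $t\in\mathcal T$ and: (1) for all $t\in\mathcal T$, $\|\mathbb E[F(X,t)\mid Y]-\mathbb E[F(X,t)]\|_{L_\infty(\mathbb P)}\le C<\infty$; (2) for every $x\in\mathcal X$ the map $t\mapsto F(x,t)$ is continuous; (3) there is $\epsilon>0$ and, for every $t\in\mathcal T$, a measurable $L_t:\mathcal X\to\mathbb R_+$ with $\sup_{t'\in B(t,\epsilon)}|F(x,t')|\le L_t(x)$ for all $x\in\mathcal X$ and $L_t(X)$ integrable. Then there is a version of the conditional expectations $\mathbb E[F(X,t)\mid Y]$ such that for $\mathbb P$-almost all $y\in\mathcal Y$ one has, simultaneously for all $t\in\mathcal T$, $|\mathbb E[F(X,t)\mid Y=y]-\mathbb E[F(X,t)]|\le C$. In particular, if $\mathcal T=\mathcal Y$, then $\|\mathbb E[F(X,Y)\mid Y]-\mathbb E[F(\tilde X,Y)\mid Y]\|_{L_\infty(\mathbb P)}\le C$, where $\tilde X$ is a copy of $X$ (same distribution) independent of $Y$.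
   Context: All spaces carry their Borel $\sigma$-algebras. $\|\cdot\|_{L_\infty(\mathbb P)}$ is the essential supremum norm. *)

theory Defs
  imports "HOL-Probability.Probability"
begin

end

theory Submission imports Defs "HOL-Probability.Probability" begin
lemma doob_dynkin_real:
  fixes Z :: "'w \<Rightarrow> real" and Y :: "'w \<Rightarrow> 'y"
  assumes Y: "Y \<in> M \<rightarrow>\<^sub>M N"
    and Z: "Z \<in> borel_measurable (vimage_algebra (space M) Y N)"
  shows "\<exists>g \<in> borel_measurable N. \<forall>\<omega>\<in>space M. g (Y \<omega>) = Z \<omega>"
proof -
  have YS: "Y \<in> space M \<rightarrow> space N" using measurable_space[OF Y] by auto
  have "\<forall>q. \<exists>A\<in>sets N. {\<omega>\<in>space M. Z \<omega> < q} = Y -` A \<inter> space M"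
  proof
    fix q :: real
    have "{\<omega>\<in>space (vimage_algebra (space M) Y N). Z \<omega> < q} \<in> sets (vimage_algebra (space M) Y N)"
      using Z by measurable
    then show "\<exists>A\<in>sets N. {\<omega>\<in>space M. Z \<omega> < q} = Y -` A \<inter> space M"
      unfolding sets_vimage_algebra2[OF YS] by auto
  qed
  then obtain A where A: "\<And>q. A q \<in> sets N" "\<And>q. {\<omega>\<in>space M. Z \<omega> < q} = Y -` A q \<inter> space M"
    by metis
  define g where "g y = real_of_ereal (INF q\<in>\<rat>. if y \<in> A q then ereal q else \<infinity>)" for y
  have "g \<in> borel_measurable N"
    unfolding g_def using A(1) countable_rat by measurable
  moreover have "g (Y \<omega>) = Z \<omega>" if w: "\<omega> \<in> space M" for \<omega>
  proof -
    have mem: "Y \<omega> \<in> A q \<longleftrightarrow> Z \<omega> < q" for q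
      using A(2)[of q] w by blast
    have "(INF q\<in>\<rat>. if Y \<omega> \<in> A q then ereal q else \<infinity>) = ereal (Z \<omega>)"
    proof (rule antisym)
      show "ereal (Z \<omega>) \<le> (INF q\<in>\<rat>. if Y \<omega> \<in> A q then ereal q else \<infinity>)"
        by (rule INF_greatest) (auto simp: mem)
      show "(INF q\<in>\<rat>. if Y \<omega> \<in> A q then ereal q else \<infinity>) \<le> ereal (Z \<omega>)"
      proof (rule dense_ge)
        fix b assume b: "ereal (Z \<omega>) < b"
        obtain q where q: "q \<in> \<rat>" "Z \<omega> < q" "ereal q < b"
        proof (cases b)
          case (real r)
          with b obtain q where "q \<in> \<rat>" "Z \<omega> < q" "q < r"
            using Rats_dense_in_real by force
          then show ?thesis using that real by auto
        next
          case PInf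
          obtain q where "q \<in> \<rat>" "Z \<omega> < q" "q < Z \<omega> + 1"
            using Rats_dense_in_real[of "Z \<omega>" "Z \<omega> + 1"] by auto
          then show ?thesis using that PInf by auto
        qed (use b in auto)
        have "(INF q\<in>\<rat>. if Y \<omega> \<in> A q then ereal q else \<infinity>) \<le> ereal q"
          using q by (intro INF_lower2[of q]) (auto simp: mem)
        then show "(INF q\<in>\<rat>. if Y \<omega> \<in> A q then ereal q else \<infinity>) \<le> b" using q by auto
      qed
    qed
    then show ?thesis by (simp add: g_def)
  qed
  ultimately show ?thesis by blast
qed

lemma F_comp_meas:
  fixes F :: "'x::polish_space \<Rightarrow> 't::polish_space \<Rightarrow> real"
  assumes F: "(\<lambda>(x, t). F x t) \<in> borel_measurable borel"
    and X: "X \<in> M \<rightarrow>\<^sub>M borel" and k: "k \<in> M \<rightarrow>\<^sub>M borel"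
  shows "(\<lambda>\<omega>. F (X \<omega>) (k \<omega>)) \<in> borel_measurable M"
proof -
  have "(\<lambda>\<omega>. (X \<omega>, k \<omega>)) \<in> M \<rightarrow>\<^sub>M borel \<Otimes>\<^sub>M borel" using X k by measurable
  then have "(\<lambda>\<omega>. (X \<omega>, k \<omega>)) \<in> M \<rightarrow>\<^sub>M borel" by (simp add: borel_prod)
  from measurable_compose[OF this F] show ?thesis by simp
qed

lemma indep_integral:
  fixes Xt :: "'w \<Rightarrow> 'x::polish_space" and Y :: "'w \<Rightarrow> 'y::polish_space" and f :: "'x \<Rightarrow> real"
  assumes P: "prob_space M"
    and Xt: "Xt \<in> M \<rightarrow>\<^sub>M borel" and Y: "Y \<in> M \<rightarrow>\<^sub>M borel"
    and ind: "prob_space.indep_set M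
                 (sigma_sets (space M) {Xt -` A \<inter> space M | A. A \<in> sets borel})
                 (sigma_sets (space M) {Y -` A \<inter> space M | A. A \<in> sets borel})"
    and f: "f \<in> borel_measurable borel" and fi: "integrable M (\<lambda>\<omega>. f (Xt \<omega>))"
    and E: "E \<in> sets borel"
  shows "(\<integral>\<omega>. indicator E (Y \<omega>) * f (Xt \<omega>) \<partial>M) = (\<integral>\<omega>. indicator E (Y \<omega>) \<partial>M) * (\<integral>\<omega>. f (Xt \<omega>) \<partial>M)"
proof -
  interpret prob_space M by (rule P)
  let ?A = "sigma_sets (space M) {Xt -` A \<inter> space M | A. A \<in> sets borel}"
  let ?B = "sigma_sets (space M) {Y -` A \<inter> space M | A. A \<in> sets borel}"
  let ?A' = "sigma_sets (space M) {(f \<circ> Xt) -` A \<inter> space M | A. A \<in> sets (borel::real measure)}"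
  let ?B' = "sigma_sets (space M) {(indicator E \<circ> Y) -` A \<inter> space M | A. A \<in> sets (borel::real measure)}"
  have sA: "?A' \<subseteq> ?A"
  proof (rule sigma_sets_mono')
    show "{(f \<circ> Xt) -` A \<inter> space M | A. A \<in> sets (borel::real measure)} \<subseteq> {Xt -` A \<inter> space M | A. A \<in> sets borel}"
    proof safe
      fix A :: "real set" assume "A \<in> sets borel"
      then have "f -` A \<in> sets borel" using measurable_sets[OF f, of A] by simp 
      moreover have "(f \<circ> Xt) -` A \<inter> space M = Xt -` (f -` A) \<inter> space M" by auto
      ultimately show "\<exists>B. (f \<circ> Xt) -` A \<inter> space M = Xt -` B \<inter> space M \<and> B \<in> sets borel" by blast
    qed
  qed
  have sB: "?B' \<subseteq> ?B"
  proof (rule sigma_sets_mono')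
    have ie: "indicator E \<in> borel_measurable (borel :: 'y measure)" using E by simp
    show "{(indicator E \<circ> Y) -` A \<inter> space M | A. A \<in> sets (borel::real measure)} \<subseteq> {Y -` A \<inter> space M | A. A \<in> sets borel}"
    proof safe
      fix A :: "real set" assume "A \<in> sets borel"
      then have "indicator E -` A \<in> sets (borel :: 'y measure)" using measurable_sets[OF ie, of A] by simp 
      moreover have "(indicator E \<circ> Y) -` A \<inter> space M = Y -` (indicator E -` A) \<inter> space M" by auto
      ultimately show "\<exists>B. (indicator E \<circ> Y) -` A \<inter> space M = Y -` B \<inter> space M \<and> B \<in> sets borel" by blast
    qed
  qed
  have "indep_set ?A' ?B'"
    using ind unfolding indep_set_def
    by (rule indep_sets_mono_sets) (use sA sB in \<open>auto split: bool.splits\<close>)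
  moreover have "random_variable borel (f \<circ> Xt)" "random_variable borel (indicator E \<circ> Y)"
    using f Xt Y E by auto
  ultimately have "indep_var borel (f \<circ> Xt) borel (indicator E \<circ> Y)" by (simp add: indep_var_eq)
  then have "(\<integral>\<omega>. (f \<circ> Xt) \<omega> * (indicator E \<circ> Y) \<omega> \<partial>M) = (\<integral>\<omega>. (f \<circ> Xt) \<omega> \<partial>M) * (\<integral>\<omega>. (indicator E \<circ> Y) \<omega> \<partial>M)"
  proof (rule indep_var_lebesgue_integral)
    show "integrable M (f \<circ> Xt)" using fi by (simp add: o_def)
    show "integrable M ((indicator E :: 'y \<Rightarrow> real) \<circ> Y)"
      by (rule integrable_const_bound[where B=1]) (use Y E in \<open>auto simp: indicator_def\<close>)
  qed
  then show ?thesis by (simp add: o_def mult.commute)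
qed

lemma int_ind:
  fixes f :: "'a \<Rightarrow> real"
  shows "A \<in> sets M \<Longrightarrow> integrable M f \<Longrightarrow> integrable M (\<lambda>x. indicator A x * f x)"
  using integrable_mult_indicator[of A M f] by simp
theorem lemmaA4:
  fixes M :: "'w measure"
    and F :: "'x::polish_space \<Rightarrow> 't::polish_space \<Rightarrow> real"
    and X :: "'w \<Rightarrow> 'x"
    and Y :: "'w \<Rightarrow> 'y::polish_space"
    and C :: real
  assumes "prob_space M"
    and F_meas: "(\<lambda>(x, t). F x t) \<in> borel_measurable borel"
    and X_meas: "X \<in> M \<rightarrow>\<^sub>M borel"
    and Y_meas: "Y \<in> M \<rightarrow>\<^sub>M borel"
    and integr: "\<And>t. integrable M (\<lambda>\<omega>. F (X \<omega>) t)"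
    and bound: "\<And>t. esssup M (\<lambda>\<omega>. ereal \<bar>real_cond_exp M (vimage_algebra (space M) Y borel)
                        (\<lambda>\<omega>. F (X \<omega>) t) \<omega> - (\<integral>\<omega>. F (X \<omega>) t \<partial>M)\<bar>) \<le> ereal C"
    and cont: "\<And>x. continuous_on UNIV (\<lambda>t. F x t)"
    and dom: "\<exists>\<epsilon>>0. \<forall>t. \<exists>L :: 'x \<Rightarrow> real. L \<in> borel_measurable borel \<and> (\<forall>x. L x \<ge> 0)
                 \<and> (\<forall>x. \<forall>t'\<in>ball t \<epsilon>. \<bar>F x t'\<bar> \<le> L x) \<and> integrable M (\<lambda>\<omega>. L (X \<omega>))"
  shows "(\<exists>g :: 't \<Rightarrow> 'y \<Rightarrow> real.
            (\<forall>t. g t \<in> borel_measurable borel \<and>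
                 (AE \<omega> in M. g t (Y \<omega>) =
                    real_cond_exp M (vimage_algebra (space M) Y borel) (\<lambda>\<omega>. F (X \<omega>) t) \<omega>))
          \<and> (AE y in distr M borel Y. \<forall>t. \<bar>g t y - (\<integral>\<omega>. F (X \<omega>) t \<partial>M)\<bar> \<le> C))
       \<and> (\<forall>(Xt :: 'w \<Rightarrow> 'x) (h :: 'y \<Rightarrow> 't).
            Xt \<in> M \<rightarrow>\<^sub>M borel \<and> distr M borel Xt = distr M borel X
            \<and> prob_space.indep_set M
                 (sigma_sets (space M) {Xt -` A \<inter> space M | A. A \<in> sets borel})
                 (sigma_sets (space M) {Y -` A \<inter> space M | A. A \<in> sets borel})
            \<and> h \<in> borel_measurable borel
            \<and> integrable M (\<lambda>\<omega>. F (X \<omega>) (h (Y \<omega>)))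
            \<and> integrable M (\<lambda>\<omega>. F (Xt \<omega>) (h (Y \<omega>)))
            \<longrightarrow> esssup M (\<lambda>\<omega>. ereal \<bar>
                   real_cond_exp M (vimage_algebra (space M) Y borel) (\<lambda>\<omega>. F (X \<omega>) (h (Y \<omega>))) \<omega>
                 - real_cond_exp M (vimage_algebra (space M) Y borel) (\<lambda>\<omega>. F (Xt \<omega>) (h (Y \<omega>))) \<omega>\<bar>)
                \<le> ereal C)"
proof -
  interpret P: prob_space M by fact
  define G where "G = vimage_algebra (space M) Y borel"
  have YS: "Y \<in> space M \<rightarrow> space borel" using measurable_space[OF Y_meas] by auto
  have subalg: "subalgebra M G"
    unfolding G_def subalgebra_def using sets_image_in_sets[OF refl Y_meas] by simp
  interpret S: finite_measure_subalgebra M G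
    by unfold_locales (rule subalg)
  have setsG: "sets G = {Y -` A \<inter> space M | A. A \<in> sets borel}"
    unfolding G_def by (rule sets_vimage_algebra2[OF YS])
  define \<phi> where "\<phi> t = (\<integral>\<omega>. F (X \<omega>) t \<partial>M)" for t
  have FXt_meas: "(\<lambda>\<omega>. F (X \<omega>) t) \<in> borel_measurable M" for t
    using integr[of t] by auto
  have bnd: "AE \<omega> in M. \<bar>real_cond_exp M G (\<lambda>\<omega>. F (X \<omega>) t) \<omega> - \<phi> t\<bar> \<le> C" for t
  proof -
    let ?f = "\<lambda>\<omega>. ereal \<bar>real_cond_exp M G (\<lambda>\<omega>. F (X \<omega>) t) \<omega> - \<phi> t\<bar>"
    have e: "esssup M ?f \<le> ereal C" using bound[of t] unfolding G_def \<phi>_def .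
    have "AE \<omega> in M. ?f \<omega> \<le> esssup M ?f" by (rule esssup_AE)
    then have "AE \<omega> in M. ?f \<omega> \<le> ereal C"
      using e by (auto elim!: eventually_mono simp del: ereal_less_eq intro: order_trans)
    then show ?thesis by simp
  qed
  have C0: "0 \<le> C"
  proof -
    have "AE \<omega> in M. 0 \<le> C" using bnd[of undefined] by eventually_elim (rule order_trans[OF abs_ge_zero])
    then show ?thesis by simp
  qed
  have part1: "\<exists>g :: 't \<Rightarrow> 'y \<Rightarrow> real.
            (\<forall>t. g t \<in> borel_measurable borel \<and>
                 (AE \<omega> in M. g t (Y \<omega>) =
                    real_cond_exp M (vimage_algebra (space M) Y borel) (\<lambda>\<omega>. F (X \<omega>) t) \<omega>))
          \<and> (AE y in distr M borel Y. \<forall>t. \<bar>g t y - (\<integral>\<omega>. F (X \<omega>) t \<partial>M)\<bar> \<le> C)"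
  proof -
    have "\<forall>t. \<exists>k \<in> borel_measurable borel. \<forall>\<omega>\<in>space M. k (Y \<omega>) = real_cond_exp M G (\<lambda>\<omega>. F (X \<omega>) t) \<omega>"
    proof
      fix t
      show "\<exists>k \<in> borel_measurable borel. \<forall>\<omega>\<in>space M. k (Y \<omega>) = real_cond_exp M G (\<lambda>\<omega>. F (X \<omega>) t) \<omega>"
        by (rule doob_dynkin_real[OF Y_meas]) (simp add: G_def[symmetric])
    qed
    then obtain k where k: "\<And>t. k t \<in> borel_measurable borel"
      "\<And>t \<omega>. \<omega> \<in> space M \<Longrightarrow> k t (Y \<omega>) = real_cond_exp M G (\<lambda>\<omega>. F (X \<omega>) t) \<omega>"
      by metis
    define g where "g t y = max (\<phi> t - C) (min (\<phi> t + C) (k t y))" for t y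
    have "g t \<in> borel_measurable borel" for t
      unfolding g_def using k(1)[of t] by measurable
    moreover have "AE \<omega> in M. g t (Y \<omega>) = real_cond_exp M G (\<lambda>\<omega>. F (X \<omega>) t) \<omega>" for t
      using bnd[of t] AE_space by eventually_elim (auto simp: g_def k(2) abs_le_iff max_def min_def)
    moreover have "\<bar>g t y - \<phi> t\<bar> \<le> C" for t y
      using C0 by (auto simp: g_def)
    ultimately show ?thesis unfolding G_def \<phi>_def by (intro exI[of _ g]) auto
  qed
  have part2: "\<forall>(Xt :: 'w \<Rightarrow> 'x) (h :: 'y \<Rightarrow> 't).
            Xt \<in> M \<rightarrow>\<^sub>M borel \<and> distr M borel Xt = distr M borel X
            \<and> prob_space.indep_set M
                 (sigma_sets (space M) {Xt -` A \<inter> space M | A. A \<in> sets borel})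
                 (sigma_sets (space M) {Y -` A \<inter> space M | A. A \<in> sets borel})
            \<and> h \<in> borel_measurable borel
            \<and> integrable M (\<lambda>\<omega>. F (X \<omega>) (h (Y \<omega>)))
            \<and> integrable M (\<lambda>\<omega>. F (Xt \<omega>) (h (Y \<omega>)))
            \<longrightarrow> esssup M (\<lambda>\<omega>. ereal \<bar>
                   real_cond_exp M (vimage_algebra (space M) Y borel) (\<lambda>\<omega>. F (X \<omega>) (h (Y \<omega>))) \<omega>
                 - real_cond_exp M (vimage_algebra (space M) Y borel) (\<lambda>\<omega>. F (Xt \<omega>) (h (Y \<omega>))) \<omega>\<bar>)
                \<le> ereal C"
  proof (intro allI impI)
    fix Xt :: "'w \<Rightarrow> 'x" and h :: "'y \<Rightarrow> 't"
    assume asm: "Xt \<in> M \<rightarrow>\<^sub>M borel \<and> distr M borel Xt = distr M borel X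
            \<and> prob_space.indep_set M
                 (sigma_sets (space M) {Xt -` A \<inter> space M | A. A \<in> sets borel})
                 (sigma_sets (space M) {Y -` A \<inter> space M | A. A \<in> sets borel})
            \<and> h \<in> borel_measurable borel
            \<and> integrable M (\<lambda>\<omega>. F (X \<omega>) (h (Y \<omega>)))
            \<and> integrable M (\<lambda>\<omega>. F (Xt \<omega>) (h (Y \<omega>)))"
    then have Xt_meas: "Xt \<in> M \<rightarrow>\<^sub>M borel" and dXt: "distr M borel Xt = distr M borel X"
      and ind: "prob_space.indep_set M
                 (sigma_sets (space M) {Xt -` A \<inter> space M | A. A \<in> sets borel})
                 (sigma_sets (space M) {Y -` A \<inter> space M | A. A \<in> sets borel})"
      and h_meas: "h \<in> borel_measurable borel"
      and i1: "integrable M (\<lambda>\<omega>. F (X \<omega>) (h (Y \<omega>)))"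
      and i2: "integrable M (\<lambda>\<omega>. F (Xt \<omega>) (h (Y \<omega>)))"
      by auto
    define pre where "pre E = Y -` E \<inter> space M" for E
    have pre_G: "E \<in> sets borel \<Longrightarrow> pre E \<in> sets G" for E
      unfolding pre_def setsG by auto
    have pre_M: "E \<in> sets borel \<Longrightarrow> pre E \<in> sets M" for E
      using pre_G subalg unfolding subalgebra_def by auto
    have Fx_meas: "(\<lambda>x. F x t) \<in> borel_measurable borel" for t
      using F_comp_meas[OF F_meas, of "\<lambda>x. x" borel "\<lambda>_. t"] by simp
    have transfer: "integrable M (\<lambda>\<omega>. f (Xt \<omega>)) \<longleftrightarrow> integrable M (\<lambda>\<omega>. f (X \<omega>))"
      "(\<integral>\<omega>. f (Xt \<omega>) \<partial>M) = (\<integral>\<omega>. f (X \<omega>) \<partial>M)"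
      if f: "f \<in> borel_measurable borel" for f :: "'x \<Rightarrow> real"
    proof -
      show "integrable M (\<lambda>\<omega>. f (Xt \<omega>)) \<longleftrightarrow> integrable M (\<lambda>\<omega>. f (X \<omega>))"
        using integrable_distr_eq[OF Xt_meas f] integrable_distr_eq[OF X_meas f] dXt by simp
      show "(\<integral>\<omega>. f (Xt \<omega>) \<partial>M) = (\<integral>\<omega>. f (X \<omega>) \<partial>M)"
        using integral_distr[OF Xt_meas f] integral_distr[OF X_meas f] dXt by simp
    qed
    have indep': "(\<integral>\<omega>. indicator (pre E) \<omega> * f (Xt \<omega>) \<partial>M) = measure M (pre E) * (\<integral>\<omega>. f (Xt \<omega>) \<partial>M)"
      if f: "f \<in> borel_measurable borel" and fi: "integrable M (\<lambda>\<omega>. f (Xt \<omega>))" and E: "E \<in> sets borel"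
      for f :: "'x \<Rightarrow> real" and E
    proof -
      have "(\<integral>\<omega>. indicator (pre E) \<omega> * f (Xt \<omega>) \<partial>M) = (\<integral>\<omega>. indicator E (Y \<omega>) * f (Xt \<omega>) \<partial>M)"
        by (rule Bochner_Integration.integral_cong) (auto simp: pre_def indicator_def)
      also have "\<dots> = (\<integral>\<omega>. indicator E (Y \<omega>) \<partial>M) * (\<integral>\<omega>. f (Xt \<omega>) \<partial>M)"
        by (rule indep_integral[OF _ Xt_meas Y_meas ind f fi E]) fact
      also have "(\<integral>\<omega>. indicator E (Y \<omega>) \<partial>M) = (\<integral>\<omega>. indicator (pre E) \<omega> \<partial>M)"
        by (rule Bochner_Integration.integral_cong) (auto simp: pre_def indicator_def)
      also have "\<dots> = measure M (pre E)"
        using pre_M[OF E] by simp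
      finally show ?thesis .
    qed
    have termb: "\<bar>\<integral>\<omega>. indicator (pre E) \<omega> * (F (X \<omega>) t - F (Xt \<omega>) t) \<partial>M\<bar> \<le> C * measure M (pre E)"
      if E: "E \<in> sets borel" for E t
    proof -
      let ?CE = "real_cond_exp M G (\<lambda>\<omega>. F (X \<omega>) t)"
      have A: "pre E \<in> sets M" using pre_M[OF E] .
      have iXt: "integrable M (\<lambda>\<omega>. F (Xt \<omega>) t)" using transfer[OF Fx_meas] integr by simp
      have iCE: "integrable M ?CE" using S.real_cond_exp_int(1)[OF integr] .
      have e1: "(\<integral>\<omega>. indicator (pre E) \<omega> * F (X \<omega>) t \<partial>M) = (\<integral>\<omega>. indicator (pre E) \<omega> * ?CE \<omega> \<partial>M)"
        using S.real_cond_exp_intA[OF integr pre_G[OF E]] unfolding set_lebesgue_integral_def by simp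
      have e2: "(\<integral>\<omega>. indicator (pre E) \<omega> * F (Xt \<omega>) t \<partial>M) = (\<integral>\<omega>. indicator (pre E) \<omega> * \<phi> t \<partial>M)"
        using indep'[OF Fx_meas iXt E] transfer(2)[OF Fx_meas] A by (simp add: \<phi>_def)
      have "(\<integral>\<omega>. indicator (pre E) \<omega> * (F (X \<omega>) t - F (Xt \<omega>) t) \<partial>M)
          = (\<integral>\<omega>. indicator (pre E) \<omega> * F (X \<omega>) t \<partial>M) - (\<integral>\<omega>. indicator (pre E) \<omega> * F (Xt \<omega>) t \<partial>M)"
        unfolding right_diff_distrib
        by (rule Bochner_Integration.integral_diff) (auto intro!: int_ind A integr iXt)
      also have "\<dots> = (\<integral>\<omega>. indicator (pre E) \<omega> * (?CE \<omega> - \<phi> t) \<partial>M)"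
        unfolding e1 e2 right_diff_distrib
        by (rule Bochner_Integration.integral_diff[symmetric]) (rule int_ind[OF A iCE], rule int_ind[OF A P.integrable_const])
      finally have eq: "(\<integral>\<omega>. indicator (pre E) \<omega> * (F (X \<omega>) t - F (Xt \<omega>) t) \<partial>M)
          = (\<integral>\<omega>. indicator (pre E) \<omega> * (?CE \<omega> - \<phi> t) \<partial>M)" .
      have "\<bar>\<integral>\<omega>. indicator (pre E) \<omega> * (?CE \<omega> - \<phi> t) \<partial>M\<bar> \<le> (\<integral>\<omega>. norm (indicator (pre E) \<omega> * (?CE \<omega> - \<phi> t)) \<partial>M)"
        using integral_norm_bound[of M "\<lambda>\<omega>. indicator (pre E) \<omega> * (?CE \<omega> - \<phi> t)"] by simp
      also have "\<dots> \<le> (\<integral>\<omega>. indicator (pre E) \<omega> * C \<partial>M)"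
      proof (rule integral_mono_AE)
        show "integrable M (\<lambda>\<omega>. norm (indicator (pre E) \<omega> * (?CE \<omega> - \<phi> t)))"
          by (intro integrable_norm int_ind A Bochner_Integration.integrable_diff iCE) simp
        show "integrable M (\<lambda>\<omega>. indicator (pre E) \<omega> * C)"
          by (intro int_ind A) simp
        show "AE \<omega> in M. norm (indicator (pre E) \<omega> * (?CE \<omega> - \<phi> t)) \<le> indicator (pre E) \<omega> * C"
          using bnd[of t] by eventually_elim (simp add: indicator_def C0)
      qed
      also have "\<dots> = C * measure M (pre E)" using A by simp
      finally show ?thesis unfolding eq .
    qed
    obtain \<epsilon> where \<epsilon>: "\<epsilon> > 0" and dom\<epsilon>: "\<forall>t. \<exists>L :: 'x \<Rightarrow> real. L \<in> borel_measurable borel \<and> (\<forall>x. L x \<ge> 0)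
                 \<and> (\<forall>x. \<forall>t'\<in>ball t \<epsilon>. \<bar>F x t'\<bar> \<le> L x) \<and> integrable M (\<lambda>\<omega>. L (X \<omega>))"
      using dom by blast
    then obtain Lf where Lf: "\<And>t. Lf t \<in> borel_measurable borel" "\<And>t x. Lf t x \<ge> 0"
      "\<And>t x t'. t' \<in> ball t \<epsilon> \<Longrightarrow> \<bar>F x t'\<bar> \<le> Lf t x" "\<And>t. integrable M (\<lambda>\<omega>. Lf t (X \<omega>))"
      by metis
    obtain Dd :: "'t set" where Dd: "countable Dd" "\<And>U. open U \<Longrightarrow> U \<noteq> {} \<Longrightarrow> \<exists>d\<in>Dd. d \<in> U"
      using countable_dense_setE by blast
    have Dne: "Dd \<noteq> {}" using Dd(2)[of UNIV] by auto
    define q where "q = from_nat_into Dd"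
    have qd: "\<exists>j. dist (q j) t < r" if rpos: "r > 0" for t r
    proof -
      obtain d where d: "d \<in> Dd" "d \<in> ball t r" using Dd(2)[of "ball t r"] rpos by auto
      have "q (to_nat_on Dd d) = d" unfolding q_def using d(1) Dd(1) by simp
      then show ?thesis using d(2) by (metis dist_commute mem_ball)
    qed
    have keyb: "\<bar>\<integral>\<omega>. indicator (pre B) \<omega> * (F (X \<omega>) (h (Y \<omega>)) - F (Xt \<omega>) (h (Y \<omega>))) \<partial>M\<bar> \<le> C * measure M (pre B)"
      if B: "B \<in> sets borel" and Bs: "\<And>y. y \<in> B \<Longrightarrow> dist (h y) s < \<epsilon> / 2" for B s
    proof -
      define L where "L = Lf s"
      have Lm: "L \<in> borel_measurable borel" and L0: "\<And>x. L x \<ge> 0"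
        and Lb: "\<And>x t'. dist s t' < \<epsilon> \<Longrightarrow> \<bar>F x t'\<bar> \<le> L x"
        and LX: "integrable M (\<lambda>\<omega>. L (X \<omega>))"
        using Lf unfolding L_def by auto
      have LXt: "integrable M (\<lambda>\<omega>. L (Xt \<omega>))" using transfer[OF Lm] LX by simp
      define w where "w \<omega> = L (X \<omega>) + L (Xt \<omega>)" for \<omega>
      have wi: "integrable M w" unfolding w_def using LX LXt by simp
      define r where "r n = (\<epsilon> / 2) / real (Suc n)" for n :: nat
      have r0: "r n > 0" for n unfolding r_def using \<epsilon> by simp
      have rle: "r n \<le> \<epsilon> / 2" for n unfolding r_def using \<epsilon> by (simp add: field_simps)
      have rlim: "r \<longlonglongrightarrow> 0"
        unfolding r_def using LIMSEQ_Suc[OF lim_const_over_n[of "\<epsilon> / 2"]] by simp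
      define J where "J n y = (LEAST j. dist (q j) (h y) < r n)" for n y
      have Jd: "dist (q (J n y)) (h y) < r n" for n y
        unfolding J_def by (rule LeastI_ex) (use qd[OF r0] in auto)
      have J_meas: "J n \<in> borel \<rightarrow>\<^sub>M count_space UNIV" for n
        unfolding J_def using h_meas by measurable
      define hn where "hn n y = q (J n y)" for n y
      have hn_meas: "hn n \<in> borel_measurable borel" for n
        unfolding hn_def by (rule measurable_compose_countable[OF _ J_meas]) simp
      have hn_ball: "dist s (hn n y) < \<epsilon>" if "y \<in> B" for n y
      proof -
        have "dist s (hn n y) \<le> dist s (h y) + dist (h y) (hn n y)" by (rule dist_triangle)
        also have "\<dots> < \<epsilon> / 2 + r n"
          using Bs[OF that] Jd[of n y] by (simp add: hn_def dist_commute add_strict_mono)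
        also have "\<dots> \<le> \<epsilon>" using rle[of n] by simp
        finally show ?thesis .
      qed
      have hn_lim: "(\<lambda>n. hn n y) \<longlonglongrightarrow> h y" for y
      proof (rule tendsto_dist_iff[THEN iffD2], rule Lim_null_comparison[OF _ rlim])
        show "\<forall>\<^sub>F n in sequentially. norm (dist (hn n y) (h y)) \<le> r n"
          by (intro always_eventually allI) (simp add: hn_def less_imp_le[OF Jd])
      qed
      define u where "u n \<omega> = indicator (pre B) \<omega> * (F (X \<omega>) (hn n (Y \<omega>)) - F (Xt \<omega>) (hn n (Y \<omega>)))" for n \<omega>
      define u' where "u' \<omega> = indicator (pre B) \<omega> * (F (X \<omega>) (h (Y \<omega>)) - F (Xt \<omega>) (h (Y \<omega>)))" for \<omega>
      have hnY: "(\<lambda>\<omega>. hn n (Y \<omega>)) \<in> borel_measurable M" for n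
        using hn_meas Y_meas by measurable
      have hY: "(\<lambda>\<omega>. h (Y \<omega>)) \<in> borel_measurable M"
        using h_meas Y_meas by measurable
      have u_meas: "u n \<in> borel_measurable M" for n
        unfolding u_def using F_comp_meas[OF F_meas X_meas hnY] F_comp_meas[OF F_meas Xt_meas hnY] pre_M[OF B]
        by measurable
      have u'_meas: "u' \<in> borel_measurable M"
        unfolding u'_def using F_comp_meas[OF F_meas X_meas hY] F_comp_meas[OF F_meas Xt_meas hY] pre_M[OF B]
        by measurable
      have u_bound: "norm (u n \<omega>) \<le> w \<omega>" for n \<omega>
      proof (cases "\<omega> \<in> pre B")
        case True
        then have "Y \<omega> \<in> B" by (simp add: pre_def)
        then have "dist s (hn n (Y \<omega>)) < \<epsilon>" by (rule hn_ball)
        then show ?thesis using True Lb[of "hn n (Y \<omega>)" "X \<omega>"] Lb[of "hn n (Y \<omega>)" "Xt \<omega>"]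
          by (simp add: u_def w_def)
      next
        case False
        then show ?thesis using L0[of "X \<omega>"] L0[of "Xt \<omega>"] by (simp add: u_def w_def)
      qed
      have u_lim: "(\<lambda>n. u n \<omega>) \<longlonglongrightarrow> u' \<omega>" for \<omega>
        unfolding u_def u'_def
        by (intro tendsto_intros continuous_on_tendsto_compose[OF cont hn_lim]) simp_all
      have int_lim: "(\<lambda>n. integral\<^sup>L M (u n)) \<longlonglongrightarrow> integral\<^sup>L M u'"
        by (rule integral_dominated_convergence[OF u'_meas u_meas wi]) (auto intro!: AE_I2 u_lim u_bound[unfolded real_norm_def])
      have stepA: "\<bar>integral\<^sup>L M (u n)\<bar> \<le> C * measure M (pre B)" for n
      proof -
        define E where "E j = B \<inter> {y. J n y = j}" for j
        have E_borel: "E j \<in> sets borel" for j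
        proof -
          have "{y. J n y = j} = J n -` {j} \<inter> space borel" by auto
          also have "\<dots> \<in> sets borel" by (rule measurable_sets[OF J_meas]) simp
          finally show ?thesis unfolding E_def using B by auto
        qed
        have pre_E: "indicator (pre (E j)) \<omega> = (if J n (Y \<omega>) = j then indicator (pre B) \<omega> else (0::real))" for j \<omega>
          by (auto simp: pre_def E_def indicator_def)
        have sumid: "(\<Sum>j<N. indicator (pre (E j)) \<omega> * \<psi>) = (if J n (Y \<omega>) < N then indicator (pre B) \<omega> * \<psi> else 0)"
          for N \<omega> and \<psi> :: real
          by (simp add: pre_E if_distrib[of "\<lambda>x. x * \<psi>"] sum.delta' cong: if_cong)
        define v where "v N \<omega> = (if J n (Y \<omega>) < N then u n \<omega> else 0)" for N \<omega>
        have v_eq: "v N \<omega> = (\<Sum>j<N. indicator (pre (E j)) \<omega> * (F (X \<omega>) (q j) - F (Xt \<omega>) (q j)))" for N \<omega>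
        proof -
          have "(\<Sum>j<N. indicator (pre (E j)) \<omega> * (F (X \<omega>) (q j) - F (Xt \<omega>) (q j)))
              = (\<Sum>j<N. indicator (pre (E j)) \<omega> * (F (X \<omega>) (hn n (Y \<omega>)) - F (Xt \<omega>) (hn n (Y \<omega>))))"
            by (rule sum.cong) (auto simp: pre_E hn_def)
          also have "\<dots> = v N \<omega>" unfolding sumid v_def u_def by simp
          finally show ?thesis by simp
        qed
        have iXq: "integrable M (\<lambda>\<omega>. F (Xt \<omega>) t)" for t using transfer[OF Fx_meas] integr by simp
        have v_int: "integral\<^sup>L M (v N) = (\<Sum>j<N. \<integral>\<omega>. indicator (pre (E j)) \<omega> * (F (X \<omega>) (q j) - F (Xt \<omega>) (q j)) \<partial>M)" for N
          unfolding v_eq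
          by (rule Bochner_Integration.integral_sum) (auto intro!: int_ind pre_M E_borel integr iXq)
        have meas_sum: "(\<Sum>j<N. measure M (pre (E j))) \<le> measure M (pre B)" for N
        proof -
          have "(\<Sum>j<N. measure M (pre (E j))) = (\<Sum>j<N. \<integral>\<omega>. indicator (pre (E j)) \<omega> * 1 \<partial>M)"
            using pre_M[OF E_borel] by simp
          also have "\<dots> = (\<integral>\<omega>. (\<Sum>j<N. indicator (pre (E j)) \<omega> * 1) \<partial>M)"
            by (rule Bochner_Integration.integral_sum[symmetric]) (auto intro!: integrable_real_indicator pre_M E_borel simp: less_top[symmetric])
          also have "\<dots> = (\<integral>\<omega>. (if J n (Y \<omega>) < N then indicator (pre B) \<omega> * 1 else 0) \<partial>M)"
            unfolding sumid ..
          also have "\<dots> \<le> (\<integral>\<omega>. indicator (pre B) \<omega> \<partial>M)"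
          proof (rule integral_mono)
            have m: "(\<lambda>\<omega>. J n (Y \<omega>)) \<in> M \<rightarrow>\<^sub>M count_space UNIV"
              using J_meas Y_meas by measurable
            show "integrable M (\<lambda>\<omega>. if J n (Y \<omega>) < N then indicator (pre B) \<omega> * 1 else (0::real))"
              by (rule P.integrable_const_bound[where B=1]) (use m pre_M[OF B] in \<open>auto simp: indicator_def\<close>)
            show "integrable M (indicator (pre B) :: 'w \<Rightarrow> real)" using pre_M[OF B] by (auto intro!: integrable_real_indicator simp: less_top[symmetric])
          qed (auto simp: indicator_def)
          also have "\<dots> = measure M (pre B)" using pre_M[OF B] by simp
          finally show ?thesis .
        qed
        have v_bnd: "\<bar>integral\<^sup>L M (v N)\<bar> \<le> C * measure M (pre B)" for N
        proof -
          have "\<bar>integral\<^sup>L M (v N)\<bar> \<le> (\<Sum>j<N. \<bar>\<integral>\<omega>. indicator (pre (E j)) \<omega> * (F (X \<omega>) (q j) - F (Xt \<omega>) (q j)) \<partial>M\<bar>)"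
            unfolding v_int by (rule sum_abs)
          also have "\<dots> \<le> (\<Sum>j<N. C * measure M (pre (E j)))"
            by (rule sum_mono) (rule termb[OF E_borel])
          also have "\<dots> = C * (\<Sum>j<N. measure M (pre (E j)))" by (simp add: sum_distrib_left)
          also have "\<dots> \<le> C * measure M (pre B)" by (rule mult_left_mono[OF meas_sum C0])
          finally show ?thesis .
        qed
        have w0: "w \<omega> \<ge> 0" for \<omega> unfolding w_def using L0 by (simp add: add_nonneg_nonneg)
        have v_meas: "v N \<in> borel_measurable M" for N
        proof -
          have m: "(\<lambda>\<omega>. J n (Y \<omega>)) \<in> M \<rightarrow>\<^sub>M count_space UNIV"
            using J_meas Y_meas by measurable
          show ?thesis unfolding v_def using m u_meas[of n] by measurable
        qed
        have v_lim: "(\<lambda>N. v N \<omega>) \<longlonglongrightarrow> u n \<omega>" for \<omega>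
        proof (rule tendsto_eventually)
          show "\<forall>\<^sub>F N in sequentially. v N \<omega> = u n \<omega>"
            unfolding eventually_sequentially v_def by (rule exI[of _ "Suc (J n (Y \<omega>))"]) auto
        qed
        have "(\<lambda>N. integral\<^sup>L M (v N)) \<longlonglongrightarrow> integral\<^sup>L M (u n)"
          by (rule integral_dominated_convergence[OF u_meas v_meas wi])
            (auto intro!: AE_I2 v_lim[unfolded v_def] simp: v_def w0 u_bound[unfolded real_norm_def])
        then have "(\<lambda>N. \<bar>integral\<^sup>L M (v N)\<bar>) \<longlonglongrightarrow> \<bar>integral\<^sup>L M (u n)\<bar>"
          by (rule tendsto_rabs)
        then show ?thesis
          by (rule LIMSEQ_le_const2) (use v_bnd in auto)
      qed
      have "(\<lambda>n. \<bar>integral\<^sup>L M (u n)\<bar>) \<longlonglongrightarrow> \<bar>integral\<^sup>L M u'\<bar>"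
        by (rule tendsto_rabs[OF int_lim])
      then have "\<bar>integral\<^sup>L M u'\<bar> \<le> C * measure M (pre B)"
        by (rule LIMSEQ_le_const2) (use stepA in auto)
      then show ?thesis unfolding u'_def .
    qed
    show "esssup M (\<lambda>\<omega>. ereal \<bar>
                   real_cond_exp M (vimage_algebra (space M) Y borel) (\<lambda>\<omega>. F (X \<omega>) (h (Y \<omega>))) \<omega>
                 - real_cond_exp M (vimage_algebra (space M) Y borel) (\<lambda>\<omega>. F (Xt \<omega>) (h (Y \<omega>))) \<omega>\<bar>)
                \<le> ereal C"
    proof -
      define CE1 where "CE1 = real_cond_exp M G (\<lambda>\<omega>. F (X \<omega>) (h (Y \<omega>)))"
      define CE2 where "CE2 = real_cond_exp M G (\<lambda>\<omega>. F (Xt \<omega>) (h (Y \<omega>)))"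
      have CE1G: "CE1 \<in> borel_measurable G" unfolding CE1_def by simp
      have CE2G: "CE2 \<in> borel_measurable G" unfolding CE2_def by simp
      have CE1M: "CE1 \<in> borel_measurable M" by (rule measurable_from_subalg[OF subalg CE1G])
      have CE2M: "CE2 \<in> borel_measurable M" by (rule measurable_from_subalg[OF subalg CE2G])
      have iCE1: "integrable M CE1" unfolding CE1_def by (rule S.real_cond_exp_int(1)[OF i1])
      have iCE2: "integrable M CE2" unfolding CE2_def by (rule S.real_cond_exp_int(1)[OF i2])
      have sgAE: "AE \<omega> in M. sg * (CE1 \<omega> - CE2 \<omega>) \<le> C" if sg: "sg = 1 \<or> sg = -1" for sg :: real
      proof -
        define D where "D \<omega> = sg * (CE1 \<omega> - CE2 \<omega>)" for \<omega>
        have DG: "D \<in> borel_measurable G" unfolding D_def using CE1G CE2G by measurable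
        have DM: "D \<in> borel_measurable M" unfolding D_def using CE1M CE2M by measurable
        have "{\<omega> \<in> space G. C < D \<omega>} \<in> sets G" using DG by measurable
        moreover have "space G = space M" unfolding G_def by simp
        ultimately have "{\<omega> \<in> space M. C < D \<omega>} \<in> sets G" by simp
        then obtain Gb where Gb: "Gb \<in> sets borel" "{\<omega> \<in> space M. C < D \<omega>} = pre Gb"
          unfolding setsG pre_def by auto
        define Gj where "Gj j = Gb \<inter> (h -` ball (q j) (\<epsilon> / 2) \<inter> space borel)" for j
        have Gj_borel: "Gj j \<in> sets borel" for j
          unfolding Gj_def using Gb(1) measurable_sets[OF h_meas, of "ball (q j) (\<epsilon> / 2)"] by auto
        have nj: "AE \<omega> in M. \<omega> \<notin> pre (Gj j)" for j
        proof -
          have A: "pre (Gj j) \<in> sets M" using pre_M[OF Gj_borel] .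
          have kb: "\<bar>\<integral>\<omega>. indicator (pre (Gj j)) \<omega> * (F (X \<omega>) (h (Y \<omega>)) - F (Xt \<omega>) (h (Y \<omega>))) \<partial>M\<bar>
              \<le> C * measure M (pre (Gj j))"
            by (rule keyb[OF Gj_borel, of _ "q j"]) (auto simp: Gj_def dist_commute)
          have e1: "(\<integral>\<omega>. indicator (pre (Gj j)) \<omega> * F (X \<omega>) (h (Y \<omega>)) \<partial>M) = (\<integral>\<omega>. indicator (pre (Gj j)) \<omega> * CE1 \<omega> \<partial>M)"
            using S.real_cond_exp_intA[OF i1 pre_G[OF Gj_borel]] unfolding set_lebesgue_integral_def CE1_def by simp
          have e2: "(\<integral>\<omega>. indicator (pre (Gj j)) \<omega> * F (Xt \<omega>) (h (Y \<omega>)) \<partial>M) = (\<integral>\<omega>. indicator (pre (Gj j)) \<omega> * CE2 \<omega> \<partial>M)"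
            using S.real_cond_exp_intA[OF i2 pre_G[OF Gj_borel]] unfolding set_lebesgue_integral_def CE2_def by simp
          have d1: "(\<integral>\<omega>. indicator (pre (Gj j)) \<omega> * (F (X \<omega>) (h (Y \<omega>)) - F (Xt \<omega>) (h (Y \<omega>))) \<partial>M)
              = (\<integral>\<omega>. indicator (pre (Gj j)) \<omega> * CE1 \<omega> \<partial>M) - (\<integral>\<omega>. indicator (pre (Gj j)) \<omega> * CE2 \<omega> \<partial>M)"
            unfolding right_diff_distrib e1[symmetric] e2[symmetric]
            by (rule Bochner_Integration.integral_diff) (rule int_ind[OF A i1], rule int_ind[OF A i2])
          have d2: "(\<integral>\<omega>. indicator (pre (Gj j)) \<omega> * (D \<omega> - C) \<partial>M)
              = sg * ((\<integral>\<omega>. indicator (pre (Gj j)) \<omega> * CE1 \<omega> \<partial>M) - (\<integral>\<omega>. indicator (pre (Gj j)) \<omega> * CE2 \<omega> \<partial>M))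
                - C * measure M (pre (Gj j))"
          proof -
            have "(\<lambda>\<omega>. indicator (pre (Gj j)) \<omega> * (D \<omega> - C)) =
                (\<lambda>\<omega>. sg * (indicator (pre (Gj j)) \<omega> * CE1 \<omega>) - sg * (indicator (pre (Gj j)) \<omega> * CE2 \<omega>) - indicator (pre (Gj j)) \<omega> * C)"
              by (auto simp: D_def algebra_simps)
            then have "(\<integral>\<omega>. indicator (pre (Gj j)) \<omega> * (D \<omega> - C) \<partial>M) =
                (\<integral>\<omega>. sg * (indicator (pre (Gj j)) \<omega> * CE1 \<omega>) \<partial>M) - (\<integral>\<omega>. sg * (indicator (pre (Gj j)) \<omega> * CE2 \<omega>) \<partial>M)
                - (\<integral>\<omega>. indicator (pre (Gj j)) \<omega> * C \<partial>M)"
              using int_ind[OF A iCE1] int_ind[OF A iCE2] int_ind[OF A P.integrable_const[of C]] by simp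
            also have "\<dots> = sg * ((\<integral>\<omega>. indicator (pre (Gj j)) \<omega> * CE1 \<omega> \<partial>M) - (\<integral>\<omega>. indicator (pre (Gj j)) \<omega> * CE2 \<omega> \<partial>M))
                - C * measure M (pre (Gj j))"
              using A by (simp add: right_diff_distrib)
            finally show ?thesis .
          qed
          have le0: "(\<integral>\<omega>. indicator (pre (Gj j)) \<omega> * (D \<omega> - C) \<partial>M) \<le> 0"
          proof -
            have "sg * ((\<integral>\<omega>. indicator (pre (Gj j)) \<omega> * CE1 \<omega> \<partial>M) - (\<integral>\<omega>. indicator (pre (Gj j)) \<omega> * CE2 \<omega> \<partial>M))
                \<le> \<bar>(\<integral>\<omega>. indicator (pre (Gj j)) \<omega> * CE1 \<omega> \<partial>M) - (\<integral>\<omega>. indicator (pre (Gj j)) \<omega> * CE2 \<omega> \<partial>M)\<bar>"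
              using sg by auto
            then show ?thesis unfolding d2 using kb unfolding d1 by linarith
          qed
          have nonneg: "0 \<le> indicator (pre (Gj j)) \<omega> * (D \<omega> - C)" if "\<omega> \<in> space M" for \<omega>
          proof (cases "\<omega> \<in> pre (Gj j)")
            case True
            then have "\<omega> \<in> pre Gb" by (auto simp: pre_def Gj_def)
            then have "C < D \<omega>" using Gb(2) by blast
            then show ?thesis by simp
          qed simp
          have intg: "integrable M (\<lambda>\<omega>. indicator (pre (Gj j)) \<omega> * (D \<omega> - C))"
          proof -
            have "integrable M (\<lambda>\<omega>. D \<omega> - C)"
              unfolding D_def using iCE1 iCE2 P.integrable_const[of C] by simp
            then show ?thesis by (rule int_ind[OF A])
          qed
          have ae0: "AE \<omega> in M. 0 \<le> indicator (pre (Gj j)) \<omega> * (D \<omega> - C)"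
            by (rule AE_I2) (rule nonneg)
          have "0 \<le> (\<integral>\<omega>. indicator (pre (Gj j)) \<omega> * (D \<omega> - C) \<partial>M)"
            by (rule integral_nonneg_AE[OF ae0])
          then have "(\<integral>\<omega>. indicator (pre (Gj j)) \<omega> * (D \<omega> - C) \<partial>M) = 0"
            using le0 by linarith
          then have "AE \<omega> in M. indicator (pre (Gj j)) \<omega> * (D \<omega> - C) = 0"
            using integral_nonneg_eq_0_iff_AE[OF intg ae0] by simp
          then show ?thesis
          proof (rule AE_mp, intro AE_I2 impI)
            fix \<omega> assume z: "indicator (pre (Gj j)) \<omega> * (D \<omega> - C) = 0"
            show "\<omega> \<notin> pre (Gj j)"
            proof
              assume inn: "\<omega> \<in> pre (Gj j)"
              then have "\<omega> \<in> pre Gb" by (auto simp: pre_def Gj_def)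
              then have "C < D \<omega>" using Gb(2) by blast
              then show False using inn z by simp
            qed
          qed
        qed
        have "AE \<omega> in M. \<forall>j. \<omega> \<notin> pre (Gj j)" unfolding AE_all_countable using nj by blast
        then have "AE \<omega> in M. D \<omega> \<le> C"
        proof (rule AE_mp, intro AE_I2 impI)
          fix \<omega> assume w: "\<omega> \<in> space M" "\<forall>j. \<omega> \<notin> pre (Gj j)"
          show "D \<omega> \<le> C"
          proof (rule ccontr)
            assume "\<not> D \<omega> \<le> C"
            then have "\<omega> \<in> {\<omega> \<in> space M. C < D \<omega>}" using w(1) by simp
            then have "\<omega> \<in> pre Gb" using Gb(2) by blast
            then have YG: "Y \<omega> \<in> Gb" by (simp add: pre_def)
            obtain j where "dist (q j) (h (Y \<omega>)) < \<epsilon> / 2" using qd[of "\<epsilon> / 2"] \<epsilon> by auto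
            then have "\<omega> \<in> pre (Gj j)" using YG w(1) by (simp add: pre_def Gj_def dist_commute)
            then show False using w(2) by blast
          qed
        qed
        then show ?thesis by (simp add: D_def)
      qed
      have "AE \<omega> in M. ereal \<bar>CE1 \<omega> - CE2 \<omega>\<bar> \<le> ereal C"
      proof -
        have a1: "AE \<omega> in M. 1 * (CE1 \<omega> - CE2 \<omega>) \<le> C" by (rule sgAE) simp
        have a2: "AE \<omega> in M. (-1) * (CE1 \<omega> - CE2 \<omega>) \<le> C" by (rule sgAE) simp
        from a1 a2 show ?thesis by eventually_elim auto
      qed
      then have "esssup M (\<lambda>\<omega>. ereal \<bar>CE1 \<omega> - CE2 \<omega>\<bar>) \<le> ereal C"
        by (intro esssup_I) (use CE1M CE2M in measurable)
      then show ?thesis unfolding CE1_def CE2_def G_def .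
    qed
  qed
  show ?thesis using part1 part2 by blast
qed
end
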